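(* Let $C = c_0c_1\dots c_{m-1}c_0$ and $D=(0)(1)\dots(n-1)(0)$ be reflexive digraph cycles with $D$ non-contractible. Let $\phi \in \mathrm{Hom}(C,D)$ and let $S$ be the vertex set of a subpath of $C$ all of whose edges are stationary under $\phi$, so that $\phi$ maps $S$ to a single vertex $d$ of $D$. Let $\phi'$ be the map that agrees with $\phi$ outside $S$ and maps every vertex of $S$ to $d+1$. If $\phi'$ is a homomorphism, then $\phi$ and $\phi'$ are adjacent in $\mathrm{Hom}(C,D)$ (i.e. $\phi \to \phi'$ or $\phi' \to \phi$).
   Context: A digraph is a binary relation $\to$ on a finite vertex set; $uv$ is an arc if $u\to v$; a loop is an arc $uu$; a digraph is reflexive if every vertex has a loop. A digraph cycle of length $m \geq 3$ is written $c_0c_1\dots c_{m-1}c_0$ (indices mod $m$), meaning its underlying graph is the cycle with edges $c_ic_{i+1}$; each edge may be a forward arc, a backward arc, or both. $D=(0)(1)\dots(n-1)(0)$ has as vertices the integers mod $n$, consecutive integers being adjacent. $D$ is non-contractible if it has length at least $4$ or is a directed $3$-cycle. A homomorphism $\phi:C\to D$ maps vertices so that $u\to v$ implies $\phi(u)\to\phi(v)$. $\mathrm{Hom}(C,D)$ is the digraph on homomorphisms $C \to D$ with $\phi\to\phi'$ iff for all $u \to v$ in $C$, $\phi(u)\to\phi'(v)$. Under $\phi$, an edge $c_ic_{i+1}$ is stationary if $\phi(c_i)=\phi(c_{i+1})$. *)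

theory Defs
  imports Main
begin

text \<open>A reflexive digraph cycle of length m: vertex set {0..<m} (vertex i stands for c_i,
  indices mod m), arc relation R.\<close>
definition refl_dicycle :: "nat \<Rightarrow> (nat \<Rightarrow> nat \<Rightarrow> bool) \<Rightarrow> bool" where
  "refl_dicycle m R \<longleftrightarrow> m \<ge> 3
     \<and> (\<forall>u v. R u v \<longrightarrow> u < m \<and> v < m)
     \<and> (\<forall>u<m. R u u)
     \<and> (\<forall>u<m. \<forall>v<m. u \<noteq> v \<longrightarrow>
          ((R u v \<or> R v u) \<longleftrightarrow> (v = (u + 1) mod m \<or> u = (v + 1) mod m)))"

definition non_contractible :: "nat \<Rightarrow> (nat \<Rightarrow> nat \<Rightarrow> bool) \<Rightarrow> bool" where
  "non_contractible n R \<longleftrightarrow> n \<ge> 4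
     \<or> (n = 3 \<and> ((\<forall>i<n. R i ((i + 1) mod n) \<and> \<not> R ((i + 1) mod n) i)
                 \<or> (\<forall>i<n. R ((i + 1) mod n) i \<and> \<not> R i ((i + 1) mod n))))"

definition is_hom :: "nat \<Rightarrow> (nat \<Rightarrow> nat \<Rightarrow> bool) \<Rightarrow> nat \<Rightarrow> (nat \<Rightarrow> nat \<Rightarrow> bool)
     \<Rightarrow> (nat \<Rightarrow> nat) \<Rightarrow> bool" where
  "is_hom m RC n RD f \<longleftrightarrow> (\<forall>u<m. f u < n) \<and> (\<forall>u v. RC u v \<longrightarrow> RD (f u) (f v))"

definition hom_arc :: "(nat \<Rightarrow> nat \<Rightarrow> bool) \<Rightarrow> (nat \<Rightarrow> nat \<Rightarrow> bool)
     \<Rightarrow> (nat \<Rightarrow> nat) \<Rightarrow> (nat \<Rightarrow> nat) \<Rightarrow> bool" where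
  "hom_arc RC RD f g \<longleftrightarrow> (\<forall>u v. RC u v \<longrightarrow> RD (f u) (g v))"

definition subpath_verts :: "nat \<Rightarrow> nat \<Rightarrow> nat \<Rightarrow> nat set" where
  "subpath_verts m a l = {(a + k) mod m | k. k \<le> l}"

end

theory Submission
  imports Defs
begin

lemma const_on_S:
  fixes k :: nat
  assumes a: "a < m"
    and stat: "\<forall>k<l. \<phi> ((a + k) mod m) = \<phi> ((a + k + 1) mod m)"
  shows "k \<le> l \<Longrightarrow> \<phi> ((a + k) mod m) = \<phi> a"
proof (induction k)
  case 0
  then show ?case using a by simp
next
  case (Suc k)
  have k: "k < l" using Suc.prems by simp
  have e1: "\<phi> ((a + k) mod m) = \<phi> ((a + k + 1) mod m)" using stat k by blast
  have e2: "\<phi> ((a + k) mod m) = \<phi> a" using Suc.IH k by simp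
  have e3: "a + Suc k = a + k + 1" by simp
  show ?case unfolding e3 using e1 e2 by (rule trans[OF sym])
qed

theorem lemma2p1:
  fixes m n :: nat and RC RD :: "nat \<Rightarrow> nat \<Rightarrow> bool" and \<phi> :: "nat \<Rightarrow> nat"
    and a l :: nat
  assumes C: "refl_dicycle m RC"
    and D: "refl_dicycle n RD"
    and nc: "non_contractible n RD"
    and hom: "is_hom m RC n RD \<phi>"
    and a: "a < m" and l: "l < m"
    and stat: "\<forall>k<l. \<phi> ((a + k) mod m) = \<phi> ((a + k + 1) mod m)"
    and hom': "is_hom m RC n RD
                 (\<lambda>x. if x \<in> subpath_verts m a l then (\<phi> a + 1) mod n else \<phi> x)"
  shows "hom_arc RC RD \<phi> (\<lambda>x. if x \<in> subpath_verts m a l then (\<phi> a + 1) mod n else \<phi> x)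
       \<or> hom_arc RC RD (\<lambda>x. if x \<in> subpath_verts m a l then (\<phi> a + 1) mod n else \<phi> x) \<phi>"
proof -
  define S where "S = subpath_verts m a l"
  define d where "d = \<phi> a"
  define \<psi> where "\<psi> = (\<lambda>x. if x \<in> S then (\<phi> a + 1) mod n else \<phi> x)"
  have cS: "\<phi> x = d" if "x \<in> S" for x
  proof -
    have "\<exists>k. x = (a + k) mod m \<and> k \<le> l" using that unfolding S_def subpath_verts_def
      by (simp only: mem_Collect_eq)
    then obtain k where k: "k \<le> l" and x: "x = (a + k) mod m" by blast
    show ?thesis unfolding x d_def by (rule const_on_S[OF a stat k])
  qed
  have dn: "d < n" using hom a unfolding is_hom_def d_def by auto
  have n3: "n \<ge> 3" using D unfolding refl_dicycle_def by auto
  have ne: "d \<noteq> (d + 1) mod n" using dn n3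
    by (cases "d + 1 = n") auto
  have dn1: "(d + 1) mod n < n" using n3 by simp
  have adj: "RD d ((d + 1) mod n) \<or> RD ((d + 1) mod n) d"
  proof -
    have "\<forall>u<n. \<forall>v<n. u \<noteq> v \<longrightarrow>
          ((RD u v \<or> RD v u) \<longleftrightarrow> (v = (u + 1) mod n \<or> u = (v + 1) mod n))"
      using D unfolding refl_dicycle_def by (elim conjE)
    then have "u < n \<Longrightarrow> v < n \<Longrightarrow> u \<noteq> v \<Longrightarrow> v = (u + 1) mod n \<Longrightarrow> RD u v \<or> RD v u" for u v
      by blast
    then show ?thesis using dn dn1 ne by blast
  qed
  have h1: "RD (\<phi> u) (\<phi> v)" if "RC u v" for u v using hom that unfolding is_hom_def by auto
  have h2: "RD (\<psi> u) (\<psi> v)" if "RC u v" for u v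
    using hom' that unfolding is_hom_def \<psi>_def S_def by auto
  show ?thesis
  proof (cases "RD d ((d + 1) mod n)")
    case True
    have "hom_arc RC RD \<phi> \<psi>"
      unfolding hom_arc_def
    proof (intro allI impI)
      fix u v assume r: "RC u v"
      show "RD (\<phi> u) (\<psi> v)"
      proof (cases "v \<in> S")
        case vS: True
        show ?thesis
        proof (cases "u \<in> S")
          case True
          have "\<phi> u = d" "\<psi> v = (d + 1) mod n" using cS[OF True] vS unfolding \<psi>_def d_def by simp_all
          then show ?thesis using \<open>RD d _\<close> by simp
        next
          case False then show ?thesis using h2[OF r] unfolding \<psi>_def by simp
        qed
      next
        case False then show ?thesis using h1[OF r] unfolding \<psi>_def by simp
      qed
    qed
    then show ?thesis unfolding \<psi>_def S_def by simp
  next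
    case False
    then have R: "RD ((d + 1) mod n) d" using adj by simp
    have "hom_arc RC RD \<psi> \<phi>"
      unfolding hom_arc_def
    proof (intro allI impI)
      fix u v assume r: "RC u v"
      show "RD (\<psi> u) (\<phi> v)"
      proof (cases "u \<in> S")
        case uS: True
        show ?thesis
        proof (cases "v \<in> S")
          case True
          have "\<phi> v = d" "\<psi> u = (d + 1) mod n" using cS[OF True] uS unfolding \<psi>_def d_def by simp_all
          then show ?thesis using R by simp
        next
          case False then show ?thesis using h2[OF r] unfolding \<psi>_def by simp
        qed
      next
        case False then show ?thesis using h1[OF r] unfolding \<psi>_def by simp
      qed
    qed
    then show ?thesis unfolding \<psi>_def S_def by simp
  qed
qed

end
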